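(* Let $d,b\ge1$, $M=2^b$, $\varepsilon>0$. Let $P_{U^M}$ be a rotationally symmetric codebook-generating distribution and $f$ an unbiased random encoder satisfying $\varepsilon$-LDP with respect to $P_{U^M}$ (with the selecting decoder). Then there exists a random encoder $f_2$ such that $\mathrm{Err}(f,P_{U^M})\ge\mathrm{Err}(f_2,P_{U^M})$ and $D(v,f_2,P_{U^M})=D(v',f_2,P_{U^M})$ for all $v,v'\in\mathbb{S}^{d-1}$.
   Context: $\mathbb{S}^{d-1}$ is the unit sphere in $\mathbb{R}^d$, $[M]=\{1,\dots,M\}$. The server and user share a random codebook $U^M=(U_1,\dots,U_M)\in(\mathbb{R}^d)^M$ with distribution $P_{U^M}$; the user's random encoder $f:\mathbb{S}^{d-1}\times(\mathbb{R}^d)^M\to[M]$ has transition probabilities $Q_f(m\mid v,u^M)$, and the server decodes message $m$ as $U_m$. The encoder is $\varepsilon$-LDP if $Q_f(m\mid v,u^M)\le e^\varepsilon Q_f(m\mid v',u^M)$ for all $v,v'\in\mathbb{S}^{d-1}$, $m\in[M]$ and $P_{U^M}$-almost all $u^M$; it is unbiased if $\mathbb{E}_{P_{U^M}}[\sum_{m=1}^M U_mQ_f(m\mid v,U^M)]=v$ for all $v\in\mathbb{S}^{d-1}$. Its error at $v$ is $D(v,f,P_{U^M})=\mathbb{E}_{P_{U^M}}[\sum_{m=1}^M\|U_m-v\|_2^2Q_f(m\mid v,U^M)]$, and $\mathrm{Err}(f,P_{U^M})=\sup_{v\in\mathbb{S}^{d-1}}D(v,f,P_{U^M})$. $P_{U^M}$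 is rotationally symmetric if $(U_1,\dots,U_M)$ and $(A_0U_1,\dots,A_0U_M)$ have the same distribution for every $d\times d$ orthogonal matrix $A_0$. *)

theory Defs
  imports "HOL-Probability.Probability"
begin

text \<open>Codebooks U^M are functions from a finite index type 'm (with CARD('m) = M)
  to R^d (= real^'d). The codebook space carries the product Borel sigma-algebra.\<close>

definition codebook_space :: "('m::finite \<Rightarrow> real^'d) measure" where
  "codebook_space = PiM UNIV (\<lambda>_. borel)"

definition codebook_dist :: "('m::finite \<Rightarrow> real^'d) measure \<Rightarrow> bool" where
  "codebook_dist P \<longleftrightarrow> prob_space P \<and> sets P = sets codebook_space"

definition rot_symmetric :: "('m::finite \<Rightarrow> real^'d) measure \<Rightarrow> bool" where
  "rot_symmetric P \<longleftrightarrow> (\<forall>A::real^'d^'d. orthogonal_matrix A \<longrightarrow>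
      distr P codebook_space (\<lambda>u m. A *v u m) = P)"

text \<open>A random encoder: transition probabilities Q v u m = Q_f(m | v, u^M),
  a probability vector on the messages for every input v on the sphere and codebook u,
  measurable in the codebook.\<close>
definition random_encoder ::
    "(real^'d \<Rightarrow> ('m::finite \<Rightarrow> real^'d) \<Rightarrow> 'm \<Rightarrow> real) \<Rightarrow> bool" where
  "random_encoder Q \<longleftrightarrow>
     (\<forall>v\<in>sphere 0 1. \<forall>u m. 0 \<le> Q v u m) \<and>
     (\<forall>v\<in>sphere 0 1. \<forall>u. (\<Sum>m\<in>UNIV. Q v u m) = 1) \<and>
     (\<forall>v\<in>sphere 0 1. \<forall>m. (\<lambda>u. Q v u m) \<in> borel_measurable codebook_space)"

definition LDP ::
    "real \<Rightarrow> ('m::finite \<Rightarrow> real^'d) measure \<Rightarrow> (real^'d \<Rightarrow> ('m \<Rightarrow> real^'d) \<Rightarrow> 'm \<Rightarrow> real) \<Rightarrow> bool" where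
  "LDP \<epsilon> P Q \<longleftrightarrow> (\<forall>v\<in>sphere 0 1. \<forall>v'\<in>sphere 0 1. \<forall>m.
       AE u in P. Q v u m \<le> exp \<epsilon> * Q v' u m)"

definition unbiased ::
    "('m::finite \<Rightarrow> real^'d) measure \<Rightarrow> (real^'d \<Rightarrow> ('m \<Rightarrow> real^'d) \<Rightarrow> 'm \<Rightarrow> real) \<Rightarrow> bool" where
  "unbiased P Q \<longleftrightarrow> (\<forall>v\<in>sphere 0 1.
       has_bochner_integral P (\<lambda>u. \<Sum>m\<in>UNIV. Q v u m *\<^sub>R u m) v)"

text \<open>Error at v (possibly infinite, hence ennreal) and worst-case error.\<close>
definition err_at ::
    "real^'d \<Rightarrow> (real^'d \<Rightarrow> ('m::finite \<Rightarrow> real^'d) \<Rightarrow> 'm \<Rightarrow> real) \<Rightarrow> ('m \<Rightarrow> real^'d) measure \<Rightarrow> ennreal" where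
  "err_at v Q P = (\<integral>\<^sup>+ u. ennreal (\<Sum>m\<in>UNIV. (norm (u m - v))\<^sup>2 * Q v u m) \<partial>P)"

definition Err ::
    "(real^'d \<Rightarrow> ('m::finite \<Rightarrow> real^'d) \<Rightarrow> 'm \<Rightarrow> real) \<Rightarrow> ('m \<Rightarrow> real^'d) measure \<Rightarrow> ennreal" where
  "Err Q P = (SUP v\<in>sphere 0 1. err_at v Q P)"

end

theory Submission
  imports Defs
begin
lemma meas_lin: fixes B :: "real^'d^'d"
  shows "(\<lambda>u (j::'m::finite). B *v u j) \<in> codebook_space \<rightarrow>\<^sub>M (codebook_space :: ('m \<Rightarrow> real^'d) measure)"
  unfolding codebook_space_def
  apply (rule measurable_PiM_single')
  subgoal for j
    apply (rule measurable_compose[OF measurable_component_singleton[of j UNIV]])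
     apply simp
    apply (rule borel_measurable_continuous_onI)
    apply (intro continuous_intros)
    done
  by (simp add: space_PiM)
lemma orth_norm: fixes A :: "real^'d^'d" assumes "orthogonal_matrix A"
  shows "norm (A *v x) = norm x"
  using assms orthogonal_transformation_matrix[of "(*v) A"]
  by (simp add: orthogonal_transformation_norm matrix_of_matrix_vector_mul)
lemma key:
  fixes P :: "('m::finite \<Rightarrow> real^'d) measure" and A :: "real^'d^'d"
  assumes P: "codebook_dist P" "rot_symmetric P"
    and meas: "\<And>m. (\<lambda>u. Q u m) \<in> borel_measurable codebook_space"
    and A: "orthogonal_matrix A" and Ae: "A *v e = v"
  shows "(\<integral>\<^sup>+ u. ennreal (\<Sum>m\<in>UNIV. (norm (u m - v))\<^sup>2 * Q (\<lambda>j. transpose A *v u j) m) \<partial>P)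
       = (\<integral>\<^sup>+ u. ennreal (\<Sum>m\<in>UNIV. (norm (u m - e))\<^sup>2 * Q u m) \<partial>P)"
proof -
  define T where "T = (\<lambda>(u::'m \<Rightarrow> real^'d) m. A *v u m)"
  define g where "g = (\<lambda>u. ennreal (\<Sum>m\<in>UNIV. (norm (u m - v))\<^sup>2 * Q (\<lambda>j. transpose A *v u j) m))"
  have sets: "sets P = sets codebook_space" using P(1) by (simp add: codebook_dist_def)
  have PT: "distr P codebook_space T = P" using P(2) A by (simp add: rot_symmetric_def T_def)
  have Tm: "T \<in> P \<rightarrow>\<^sub>M codebook_space"
    using measurable_cong_sets[OF sets refl] meas_lin[of A] unfolding T_def by blast
  have gm: "g \<in> borel_measurable codebook_space"
  proof -
    have c: "(\<lambda>u. u m) \<in> borel_measurable codebook_space" for m :: 'm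
      unfolding codebook_space_def by (rule measurable_component_singleton) simp
    have q: "(\<lambda>u. Q (\<lambda>j. transpose A *v u j) m) \<in> borel_measurable codebook_space" for m
      using measurable_compose[OF meas_lin[of "transpose A"] meas[of m]] .
    show ?thesis unfolding g_def
      apply (rule measurable_compose[OF _ measurable_ennreal])
      apply (intro borel_measurable_sum borel_measurable_times q)
      apply (rule borel_measurable_power)
      apply (rule borel_measurable_continuous_on[where f="\<lambda>x. norm (x - v)"])
      apply (intro continuous_intros)
      using c by auto
  qed
  have TT: "transpose A *v (A *v x) = x" for x
    using A by (simp add: orthogonal_matrix_def matrix_vector_mul_assoc)
  have "(\<integral>\<^sup>+ u. g u \<partial>P) = (\<integral>\<^sup>+ u. g u \<partial>(distr P codebook_space T))" by (simp add: PT)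
  also have "\<dots> = (\<integral>\<^sup>+ u. g (T u) \<partial>P)" by (rule nn_integral_distr[OF Tm]) (simp add: gm)
  also have "\<dots> = (\<integral>\<^sup>+ u. ennreal (\<Sum>m\<in>UNIV. (norm (u m - e))\<^sup>2 * Q u m) \<partial>P)"
  proof (rule nn_integral_cong)
    fix u :: "'m \<Rightarrow> real^'d"
    have "norm (A *v u m - v) = norm (u m - e)" for m
      using orth_norm[OF A, of "u m - e"] Ae by (simp add: matrix_vector_mult_diff_distrib)
    then show "g (T u) = ennreal (\<Sum>m\<in>UNIV. (norm (u m - e))\<^sup>2 * Q u m)"
      unfolding g_def T_def TT by simp
  qed
  finally show ?thesis by (simp add: g_def)
qed

theorem lemma4:
  fixes P :: "('m::finite \<Rightarrow> real^'d) measure"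
    and Q :: "real^'d \<Rightarrow> ('m \<Rightarrow> real^'d) \<Rightarrow> 'm \<Rightarrow> real"
    and b :: nat and \<epsilon> :: real
  assumes "b \<ge> 1" and "CARD('m) = 2 ^ b" and "\<epsilon> > 0"
    and "codebook_dist P" and "rot_symmetric P"
    and "random_encoder Q" and "unbiased P Q" and "LDP \<epsilon> P Q"
  shows "\<exists>Q2 :: real^'d \<Rightarrow> ('m \<Rightarrow> real^'d) \<Rightarrow> 'm \<Rightarrow> real.
           random_encoder Q2 \<and> Err Q P \<ge> Err Q2 P \<and>
           (\<forall>v\<in>sphere 0 1. \<forall>v'\<in>sphere 0 1. err_at v Q2 P = err_at v' Q2 P)"
proof -
  define e :: "real^'d" where "e = axis undefined 1"
  have e: "e \<in> sphere 0 1" by (simp add: e_def)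
  define Af where "Af = (\<lambda>v. SOME A :: real^'d^'d. orthogonal_matrix A \<and> A *v e = v)"
  have Af: "orthogonal_matrix (Af v) \<and> Af v *v e = v" if vin: "v \<in> sphere 0 1" for v
  proof -
    obtain A :: "real^'d^'d" where "orthogonal_matrix A" "A *v e = v"
      using orthogonal_matrix_exists_basis[of v "undefined"] vin
      unfolding e_def by (metis mem_sphere_0)
    then show ?thesis unfolding Af_def by (rule someI[where P="\<lambda>A. orthogonal_matrix A \<and> A *v e = v", OF conjI])
  qed
  define Q2 where "Q2 = (\<lambda>v u m. Q e (\<lambda>j. transpose (Af v) *v u j) m)"
  have RE: "random_encoder Q"  by fact
  have meas: "\<And>m. (\<lambda>u. Q e u m) \<in> borel_measurable codebook_space"
    using RE e unfolding random_encoder_def by blast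
  have "random_encoder Q2"
    unfolding random_encoder_def Q2_def
  proof (intro conjI ballI allI)
    fix v :: "real^'d" and u m
    show "0 \<le> Q e (\<lambda>j. transpose (Af v) *v u j) m" using RE e unfolding random_encoder_def by blast
  next
    fix v :: "real^'d" and u
    show "(\<Sum>m\<in>UNIV. Q e (\<lambda>j. transpose (Af v) *v u j) m) = 1" using RE e unfolding random_encoder_def by blast
  next
    fix v :: "real^'d" and m
    show "(\<lambda>u. Q e (\<lambda>j. transpose (Af v) *v u j) m) \<in> borel_measurable codebook_space"
      using measurable_compose[OF meas_lin[of "transpose (Af v)"] meas[of m]] .
  qed
  moreover have eq: "err_at v Q2 P = err_at e Q P" if "v \<in> sphere 0 1" for v
    unfolding err_at_def Q2_def
    using key[OF assms(4,5) meas, of "Af v" e v] Af[OF that] by simp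
  moreover have "Err Q2 P \<le> Err Q P"
    unfolding Err_def
    apply (rule SUP_least)
    apply (subst eq, assumption)
    using e by (rule SUP_upper)
  ultimately show ?thesis by auto
qed

end
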